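(* There exist $R_0>0$ (with $R_0\ll\sqrt{3/(4\pi)}$) and $C>0$ such that for every $0<R<R_0$ there is a continuous solution $(m_R,\rho_R):[0,R]\to\mathbb{R}^2$ of the system $$\frac{dm}{dr}=4\pi r^2\rho,\qquad \frac{d\rho}{dr}=-\frac{2\rho-1}{r-2m}\Big[4\pi r^2(\rho-1)+\frac{m}{r}\Big],$$ with $\rho_R$ monotone decreasing and $m_R$ monotone increasing on $[0,R]$, and such that $$1\le\rho_R(r)\le 1+CR^2,\quad \rho_R(R)=1,\qquad m_R(0)=0,\quad 1\le \frac{3}{4\pi}\frac{m_R(r)}{r^3}\le 1+CR^2,$$ where $C$ is independent of $R$.
   Context: The system is the Tolman–Oppenheimer–Volkoff system for a static spherically symmetric barotropic fluid with equation of state $p=\rho-1$ (units with critical density $1$); $m$ is the Hawking mass and $\rho$ the energy density, as functions of the area radius $r$. Such solutions are called (small) static hard stars of radius $R$. *)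

theory Defs
  imports "HOL-Analysis.Analysis"
begin

text \<open>Right-hand sides of the TOV system for the hard-star equation of state p = rho - 1.\<close>

definition tov_m_rhs :: "real \<Rightarrow> real \<Rightarrow> real \<Rightarrow> real" where
  "tov_m_rhs r m \<rho> = 4 * pi * r^2 * \<rho>"

definition tov_rho_rhs :: "real \<Rightarrow> real \<Rightarrow> real \<Rightarrow> real" where
  "tov_rho_rhs r m \<rho> = - ((2 * \<rho> - 1) / (r - 2 * m)) * (4 * pi * r^2 * (\<rho> - 1) + m / r)"

end

theory Submission
  imports Defs
begin

definition H :: "real \<Rightarrow> real \<Rightarrow> real \<Rightarrow> real" where
  "H \<rho> q t = (2*\<rho>-1) * (4*pi*(\<rho>-1)+q) * (1/(1-2*q*t))"

lemma W_bounds: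
  fixes q t :: real
  assumes "0 \<le> q" "q \<le> 9" "0 \<le> t" "t \<le> 1/10000"
  shows "1 \<le> 1/(1-2*q*t)" "1/(1-2*q*t) \<le> 2"
proof -
  have "q*t \<le> 9 * (1/10000)" using assms by (intro mult_mono) auto
  moreover have "0 \<le> q*t" using assms by simp
  ultimately have a: "1/2 \<le> 1-2*q*t" "1-2*q*t \<le> 1" by auto
  show "1 \<le> 1/(1-2*q*t)" using a by (simp add: field_simps)
  show "1/(1-2*q*t) \<le> 2" using a by (simp add: field_simps)
qed

lemma H_bound:
  assumes "1 \<le> \<rho>" "\<rho> \<le> 2" "0 \<le> q" "q \<le> 9" "0 \<le> t" "t \<le> 1/10000"
  shows "0 \<le> H \<rho> q t" "H \<rho> q t \<le> 132"
proof -
  note W = W_bounds[OF assms(3-6)]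
  have P: "1 \<le> 2*\<rho>-1" "2*\<rho>-1 \<le> 3" using assms by auto
  have Q: "0 \<le> 4*pi*(\<rho>-1)+q" "4*pi*(\<rho>-1)+q \<le> 22"
  proof -
    have "pi*(\<rho>-1) \<le> 16/5 * 1" using assms pi_approx(2)
      by (intro mult_mono) auto
    then show "4*pi*(\<rho>-1)+q \<le> 22" using assms by simp
    show "0 \<le> 4*pi*(\<rho>-1)+q" using assms by simp
  qed
  show "0 \<le> H \<rho> q t" unfolding H_def using P Q W by (intro mult_nonneg_nonneg) linarith+
  have "(2*\<rho>-1) * (4*pi*(\<rho>-1)+q) * (1/(1-2*q*t)) \<le> 3 * 22 * 2"
    using P Q W by (intro mult_mono mult_nonneg_nonneg) linarith+
  then show "H \<rho> q t \<le> 132" unfolding H_def by simp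
qed

lemma prod3_lip:
  fixes a1 a2 b1 b2 c1 c2 :: real
  assumes "\<bar>a1-a2\<bar> \<le> da" "\<bar>b1-b2\<bar> \<le> db" "\<bar>c1-c2\<bar> \<le> dc"
    "0 \<le> b1" "b1 \<le> B" "0 \<le> c1" "c1 \<le> C" "0 \<le> a2" "a2 \<le> A" "0 \<le> b2" "b2 \<le> B"
  shows "\<bar>a1*b1*c1 - a2*b2*c2\<bar> \<le> da*B*C + A*db*C + A*B*dc"
proof -
  have e: "a1*b1*c1 - a2*b2*c2 = (a1-a2)*b1*c1 + a2*(b1-b2)*c1 + a2*b2*(c1-c2)"
    by (simp add: algebra_simps)
  have 1: "\<bar>(a1-a2)*b1*c1\<bar> \<le> da*B*C"
    unfolding abs_mult using assms by (intro mult_mono) auto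
  have 2: "\<bar>a2*(b1-b2)*c1\<bar> \<le> A*db*C"
    unfolding abs_mult using assms by (intro mult_mono) auto
  have 3: "\<bar>a2*b2*(c1-c2)\<bar> \<le> A*B*dc"
    unfolding abs_mult using assms by (intro mult_mono) auto
  show ?thesis unfolding e using 1 2 3 by linarith
qed

lemma H_lip:
  fixes d :: real
  assumes "1 \<le> \<rho>1" "\<rho>1 \<le> 2" "0 \<le> q1" "q1 \<le> 9"
    "1 \<le> \<rho>2" "\<rho>2 \<le> 2" "0 \<le> q2" "q2 \<le> 9" "0 \<le> t" "t \<le> 1/10000"
    "\<bar>\<rho>1-\<rho>2\<bar> \<le> d" "\<bar>q1-q2\<bar> \<le> 5*d"
  shows "\<bar>H \<rho>1 q1 t - H \<rho>2 q2 t\<bar> \<le> 300 * d"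
proof -
  note W1 = W_bounds[OF assms(3,4,9,10)]
  note W2 = W_bounds[OF assms(7,8,9,10)]
  have pi4: "4*pi \<le> 13" using pi_approx(2) by simp
  have "pi*(\<rho>1-1) \<le> 16/5 * 1" "pi*(\<rho>2-1) \<le> 16/5 * 1" using assms pi_approx(2)
      by (intro mult_mono; simp)+
  then have Q: "4*pi*(\<rho>1-1)+q1 \<le> 22" "4*pi*(\<rho>2-1)+q2 \<le> 22"
    "0 \<le> 4*pi*(\<rho>1-1)+q1" "0 \<le> 4*pi*(\<rho>2-1)+q2" using assms by auto
  have d0: "0 \<le> d" using assms(11) by linarith
  have dP: "\<bar>(2*\<rho>1-1) - (2*\<rho>2-1)\<bar> \<le> 2*d" using assms by linarith
  have "\<bar>4*pi*(\<rho>1-\<rho>2)\<bar> \<le> 13 * d"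
    unfolding abs_mult using pi4 assms(11) d0 by (intro mult_mono) auto
  then have dQ: "\<bar>(4*pi*(\<rho>1-1)+q1) - (4*pi*(\<rho>2-1)+q2)\<bar> \<le> 18*d"
    using assms(12) by (simp add: algebra_simps)
  have nz1: "1-2*q1*t \<noteq> 0" and nz2: "1-2*q2*t \<noteq> 0" using W1 W2 by auto
  have "0 < 1/(1-2*q1*t)" "0 < 1/(1-2*q2*t)" using W1 W2 by linarith+
  then have "1-2*q1*t > 0" "1-2*q2*t > 0" unfolding zero_less_divide_1_iff .
  then have a1: "1/\<bar>1-2*q1*t\<bar> \<le> 2" and a2: "1/\<bar>1-2*q2*t\<bar> \<le> 2" using W1 W2 by auto
  have we: "1/(1-2*q1*t) - 1/(1-2*q2*t) = 2*t*(q1-q2) * (1/(1-2*q1*t)) * (1/(1-2*q2*t))"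
    using nz1 nz2 by (simp add: field_simps)
  have "\<bar>2*t*(q1-q2) * (1/(1-2*q1*t)) * (1/(1-2*q2*t))\<bar> \<le> (2*(1/10000)*(5*d))*2*2"
    unfolding abs_mult using assms W1 W2 d0 a1 a2 by (intro mult_mono) auto
  moreover have "\<And>X::real. X \<le> 2*(1/10000)*(5*d)*2*2 \<Longrightarrow> X \<le> d" using d0 by simp
  ultimately have dW: "\<bar>1/(1-2*q1*t) - 1/(1-2*q2*t)\<bar> \<le> d" unfolding we by blast
  have "\<bar>H \<rho>1 q1 t - H \<rho>2 q2 t\<bar> \<le> (2*d)*22*2 + 3*(18*d)*2 + 3*22*d"
    unfolding H_def using assms Q W1 W2
    by (intro prod3_lip[OF dP dQ dW]) linarith+
  then show ?thesis using d0 by simp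
qed


lemma G_eq:
  fixes s m \<rho> :: real
  assumes "0 < s" "1 - 2*(m/s^3)*(s^2) \<noteq> 0"
  shows "- tov_rho_rhs s m \<rho> = s * H \<rho> (m/s^3) (s^2)"
proof -
  define q where "q = m/s^3"
  define D where "D = 1 - 2*q*(s^2)"
  have D0: "D \<noteq> 0" using assms(2) unfolding D_def q_def .
  have m: "m = q * s^3" using assms(1) unfolding q_def by simp
  have a: "s - 2*m = s * D" unfolding D_def m by (simp add: algebra_simps power3_eq_cube power2_eq_square)
  have b: "m/s = s^2 * q" unfolding m using assms(1) by (simp add: power3_eq_cube power2_eq_square)
  have "- tov_rho_rhs s m \<rho> = ((2*\<rho>-1)/(s*D)) * (4*pi* s^2*(\<rho>-1) + s^2*q)"
    unfolding tov_rho_rhs_def a b by simp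
  also have "... = s * ((2*\<rho>-1) * (4*pi*(\<rho>-1)+q) * (1/D))"
    using D0 assms(1) by (simp add: field_simps power2_eq_square)
  finally show ?thesis unfolding H_def D_def q_def .
qed

lemma q_range:
  fixes s m :: real
  assumes "0 < s" "s \<le> 1/100" "0 \<le> m" "m \<le> 9* s^3"
  shows "0 \<le> m/s^3" "m/s^3 \<le> 9" "0 \<le> s^2" "s^2 \<le> 1/10000" "1 - 2*(m/s^3)*(s^2) \<noteq> 0"
proof -
  show q0: "0 \<le> m/s^3" using assms by simp
  show q9: "m/s^3 \<le> 9" using assms by (simp add: field_simps)
  show t0: "0 \<le> s^2" by simp
  have "s^2 \<le> (1/100)^2" using assms by (intro power_mono) auto
  then show t1: "s^2 \<le> 1/10000" by (simp add: power2_eq_square)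
  show "1 - 2*(m/s^3)*(s^2) \<noteq> 0"
  proof
    assume h: "1 - 2*(m/s^3)*(s^2) = 0"
    have "1/(1 - 2*(m/s^3)*(s^2)) = 0" by (simp only: h division_ring_divide_zero)
    with W_bounds(1)[OF q0 q9 t0 t1] show False by linarith
  qed
qed

lemma G_bound:
  fixes s m \<rho> :: real
  assumes "0 < s" "s \<le> 1/100" "0 \<le> m" "m \<le> 9* s^3" "1 \<le> \<rho>" "\<rho> \<le> 2"
  shows "0 \<le> - tov_rho_rhs s m \<rho>" "- tov_rho_rhs s m \<rho> \<le> 132 * s"
proof -
  note q = q_range[OF assms(1-4)]
  note e = G_eq[OF assms(1) q(5), of \<rho>]
  note hb = H_bound[OF assms(5,6) q(1-4)]
  show "0 \<le> - tov_rho_rhs s m \<rho>" unfolding e using hb assms by simp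
  show "- tov_rho_rhs s m \<rho> \<le> 132 * s" unfolding e using hb assms
    by (simp add: mult.commute)
qed

lemma G_lip:
  fixes s m1 m2 \<rho>1 \<rho>2 d :: real
  assumes "0 < s" "s \<le> 1/100" "0 \<le> m1" "m1 \<le> 9* s^3" "1 \<le> \<rho>1" "\<rho>1 \<le> 2"
    "0 \<le> m2" "m2 \<le> 9* s^3" "1 \<le> \<rho>2" "\<rho>2 \<le> 2"
    "\<bar>\<rho>1-\<rho>2\<bar> \<le> d" "\<bar>m1-m2\<bar> \<le> 5* s^3*d"
  shows "\<bar>tov_rho_rhs s m1 \<rho>1 - tov_rho_rhs s m2 \<rho>2\<bar> \<le> 300 * s * d"
proof -
  note q1 = q_range[OF assms(1-4)]
  note q2 = q_range[OF assms(1,2,7,8)]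
  note e1 = G_eq[OF assms(1) q1(5), of \<rho>1]
  note e2 = G_eq[OF assms(1) q2(5), of \<rho>2]
  have "\<bar>m1/s^3-m2/s^3\<bar> = \<bar>m1-m2\<bar>/s^3" using assms by (simp add: diff_divide_distrib[symmetric])
  also have "... \<le> 5*d" using assms by (simp add: field_simps)
  finally have dq: "\<bar>m1/s^3-m2/s^3\<bar> \<le> 5*d" .
  have h: "\<bar>H \<rho>1 (m1/s^3) (s^2) - H \<rho>2 (m2/s^3) (s^2)\<bar> \<le> 300*d"
    using H_lip[OF assms(5,6) q1(1,2) assms(9,10) q2(1,2) q1(3,4) assms(11) dq] .
  have "\<bar>tov_rho_rhs s m1 \<rho>1 - tov_rho_rhs s m2 \<rho>2\<bar> = \<bar>(- tov_rho_rhs s m1 \<rho>1) - (- tov_rho_rhs s m2 \<rho>2)\<bar>"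
    by linarith
  also have "... = s * \<bar>H \<rho>1 (m1/s^3) (s^2) - H \<rho>2 (m2/s^3) (s^2)\<bar>"
    unfolding e1 e2 using assms(1) by (simp add: abs_mult right_diff_distrib[symmetric])
  also have "... \<le> s * (300*d)" using h assms(1) by (intro mult_left_mono) auto
  finally show ?thesis by simp
qed

lemma poly_int2:
  fixes a b c :: real
  assumes "a \<le> b"
  shows "((\<lambda>s. c* s^2) has_integral (c*b^3/3 - c*a^3/3)) {a..b}"
proof -
  have "((\<lambda>s. c* s^3/3) has_vector_derivative c*x^2) (at x within {a..b})" for x
    unfolding has_real_derivative_iff_has_vector_derivative[symmetric]
    by (auto intro!: derivative_eq_intros simp: power2_eq_square)
  from fundamental_theorem_of_calculus[OF assms this] show ?thesis by simp
qed

lemma poly_int2_0: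
  fixes b c :: real
  assumes "0 \<le> b"
  shows "((\<lambda>s. c* s^2) has_integral (c*b^3/3)) {0..b}"
  using poly_int2[OF assms, of c] by simp

lemma poly_int1:
  fixes a b c :: real
  assumes "a \<le> b"
  shows "((\<lambda>s. c* s) has_integral (c*b^2/2 - c*a^2/2)) {a..b}"
proof -
  have "((\<lambda>s. c* s^2/2) has_vector_derivative c*x) (at x within {a..b})" for x
    unfolding has_real_derivative_iff_has_vector_derivative[symmetric]
    by (auto intro!: derivative_eq_intros simp: power2_eq_square)
  from fundamental_theorem_of_calculus[OF assms this] show ?thesis by simp
qed


definition mm :: "(real \<Rightarrow> real) \<Rightarrow> real \<Rightarrow> real" where
  "mm f r = integral {0..r} (\<lambda>s. 4*pi* s^2*f s)"

definition GG :: "(real \<Rightarrow> real) \<Rightarrow> real \<Rightarrow> real" where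
  "GG f s = - tov_rho_rhs s (mm f s) (f s)"

definition good :: "real \<Rightarrow> (real \<Rightarrow> real) \<Rightarrow> bool" where
  "good R f \<longleftrightarrow> continuous_on {0..R} f \<and> (\<forall>x\<in>{0..R}. 1 \<le> f x \<and> f x \<le> 2)"

definition clamp :: "real \<Rightarrow> real \<Rightarrow> real" where
  "clamp R x = max 0 (min R x)"

definition TT :: "real \<Rightarrow> (real \<Rightarrow> real) \<Rightarrow> real \<Rightarrow> real" where
  "TT R f x = 1 + integral {clamp R x..R} (GG f)"

context
  fixes R :: real
  assumes R0: "0 < R" and R1: "R \<le> 1/100"
begin

lemma mm_integrable:
  assumes "continuous_on {0..R} f" "0 \<le> a" "b \<le> R"
  shows "(\<lambda>s. 4*pi* s^2*f s) integrable_on {a..b}"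
proof -
  have "continuous_on {0..R} (\<lambda>s. 4*pi* s^2*f s)" using assms by (intro continuous_intros)
  then have "continuous_on {a..b} (\<lambda>s. 4*pi* s^2*f s)"
    by (rule continuous_on_subset) (use assms in auto)
  then show ?thesis by (rule integrable_continuous_interval)
qed

lemma mm_bounds:
  assumes "continuous_on {0..R} f" "r \<in> {0..R}" "\<And>s. s \<in> {0..r} \<Longrightarrow> lo \<le> f s \<and> f s \<le> hi"
  shows "4*pi/3*lo*r^3 \<le> mm f r" "mm f r \<le> 4*pi/3*hi*r^3"
proof -
  have i: "(\<lambda>s. 4*pi* s^2*f s) integrable_on {0..r}" using assms by (intro mm_integrable) auto
  have r0: "0 \<le> r" using assms by auto
  have l: "((\<lambda>s. (4*pi*lo)* s^2) has_integral ((4*pi*lo)*r^3/3)) {0..r}"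
    using poly_int2_0[OF r0] .
  have h: "((\<lambda>s. (4*pi*hi)* s^2) has_integral ((4*pi*hi)*r^3/3)) {0..r}"
    using poly_int2_0[OF r0] .
  have pl: "(4*pi*lo)*x^2 \<le> 4*pi*x^2*f x" and ph: "4*pi*x^2*f x \<le> (4*pi*hi)*x^2" if x: "x \<in> {0..r}" for x
  proof -
    have "(4*pi*x^2)*lo \<le> (4*pi*x^2)*f x" using assms(3)[OF x] by (intro mult_left_mono) auto
    then show "(4*pi*lo)*x^2 \<le> 4*pi*x^2*f x" by (simp add: mult_ac)
    have "(4*pi*x^2)*f x \<le> (4*pi*x^2)*hi" using assms(3)[OF x] by (intro mult_left_mono) auto
    then show "4*pi*x^2*f x \<le> (4*pi*hi)*x^2" by (simp add: mult_ac)
  qed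
  have "integral {0..r} (\<lambda>s. (4*pi*lo)* s^2) \<le> mm f r" unfolding mm_def
    using l i pl by (intro integral_le) blast+
  moreover have "integral {0..r} (\<lambda>s. (4*pi*lo)* s^2) = 4*pi/3*lo*r^3" using integral_unique[OF l] by linarith
  ultimately show "4*pi/3*lo*r^3 \<le> mm f r" by linarith
  have "mm f r \<le> integral {0..r} (\<lambda>s. (4*pi*hi)* s^2)" unfolding mm_def
    using h i ph by (intro integral_le) blast+
  moreover have "integral {0..r} (\<lambda>s. (4*pi*hi)* s^2) = 4*pi/3*hi*r^3" using integral_unique[OF h] by linarith
  ultimately show "mm f r \<le> 4*pi/3*hi*r^3" by linarith
qed

lemma mm_diff:
  assumes "continuous_on {0..R} f" "continuous_on {0..R} g" "r \<in> {0..R}"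
    "\<And>s. s \<in> {0..R} \<Longrightarrow> \<bar>f s - g s\<bar> \<le> d"
  shows "\<bar>mm f r - mm g r\<bar> \<le> 4*pi/3*d*r^3"
proof -
  have i1: "(\<lambda>s. 4*pi* s^2*f s) integrable_on {0..r}" using assms by (intro mm_integrable) auto
  have i2: "(\<lambda>s. 4*pi* s^2*g s) integrable_on {0..r}" using assms by (intro mm_integrable) auto
  have r0: "0 \<le> r" using assms by auto
  have h: "((\<lambda>s. (4*pi*d)* s^2) has_integral ((4*pi*d)*r^3/3)) {0..r}"
    using poly_int2_0[OF r0] .
  have "mm f r - mm g r = integral {0..r} (\<lambda>s. 4*pi* s^2*f s - 4*pi* s^2*g s)"
    unfolding mm_def by (rule integral_diff[OF i1 i2, symmetric])
  also have "\<bar>...\<bar> \<le> integral {0..r} (\<lambda>s. (4*pi*d)* s^2)"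
  proof -
    have "norm (integral {0..r} (\<lambda>s. 4*pi* s^2*f s - 4*pi* s^2*g s)) \<le> integral {0..r} (\<lambda>s. (4*pi*d)* s^2)"
    proof (rule integral_norm_bound_integral)
      show "(\<lambda>s. 4*pi* s^2*f s - 4*pi* s^2*g s) integrable_on {0..r}" using i1 i2 by (rule integrable_diff)
      show "(\<lambda>s. (4*pi*d)* s^2) integrable_on {0..r}" using h by blast
      fix x assume x: "x \<in> {0..r}"
      have "norm (4*pi*x^2*f x - 4*pi*x^2*g x) = (4*pi*x^2) * \<bar>f x - g x\<bar>"
        by (simp add: abs_mult right_diff_distrib[symmetric])
      also have "... \<le> (4*pi*x^2) * d" using assms(3,4) x by (intro mult_left_mono) auto
      finally show "norm (4*pi*x^2*f x - 4*pi*x^2*g x) \<le> (4*pi*d)*x^2" by (simp add: mult_ac)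
    qed
    then show ?thesis by simp
  qed
  also have "integral {0..r} (\<lambda>s. (4*pi*d)* s^2) = 4*pi/3*d*r^3" using integral_unique[OF h] by linarith
  finally show ?thesis .
qed

lemma mm_deriv:
  assumes "continuous_on {0..R} f" "r \<in> {0..R}"
  shows "(mm f has_real_derivative 4*pi*r^2*f r) (at r within {0..R})"
proof -
  have "continuous_on {0..R} (\<lambda>s. 4*pi* s^2*f s)" using assms by (intro continuous_intros)
  from integral_has_vector_derivative[OF this assms(2)] show ?thesis
    unfolding has_real_derivative_iff_has_vector_derivative mm_def .
qed

lemma mm_cont:
  assumes "continuous_on {0..R} f"
  shows "continuous_on {0..R} (mm f)"
  unfolding mm_def using mm_integrable[OF assms, of 0 R] R0
  by (intro indefinite_integral_continuous_1) auto

lemma mm_good_range: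
  assumes "good R f" "s \<in> {0..R}"
  shows "0 \<le> mm f s" "mm f s \<le> 9* s^3"
proof -
  have c: "continuous_on {0..R} f" using assms unfolding good_def by auto
  have b: "\<And>x. x \<in> {0..s} \<Longrightarrow> 1 \<le> f x \<and> f x \<le> 2" using assms unfolding good_def by auto
  have mb: "4*pi/3*1* s^3 \<le> mm f s" "mm f s \<le> 4*pi/3*2* s^3"
    using mm_bounds[OF c assms(2), of 1 2] b by blast+
  have s0: "0 \<le> s" using assms by auto
  have "0 \<le> 4*pi/3*1* s^3" using s0 by simp
  then show "0 \<le> mm f s" using mb(1) by linarith
  have "4*pi/3*2* s^3 \<le> 9* s^3" using pi_approx(2) s0 by (intro mult_right_mono) auto
  then show "mm f s \<le> 9* s^3" using mb(2) by linarith
qed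


lemma GG_zero: "GG f 0 = 0"
  unfolding GG_def tov_rho_rhs_def by simp

lemma good_cont: "good R f \<Longrightarrow> continuous_on {0..R} f" unfolding good_def by auto
lemma good_b: "good R f \<Longrightarrow> x \<in> {0..R} \<Longrightarrow> 1 \<le> f x" "good R f \<Longrightarrow> x \<in> {0..R} \<Longrightarrow> f x \<le> 2"
  unfolding good_def by auto

lemma GG_bound:
  assumes "good R f" "s \<in> {0<..R}"
  shows "0 \<le> GG f s" "GG f s \<le> 132 * s"
proof -
  have s: "s \<in> {0..R}" "0 < s" "s \<le> 1/100" using assms R1 by auto
  note G = G_bound[OF s(2,3) mm_good_range[OF assms(1) s(1)] good_b[OF assms(1) s(1)]]
  show "0 \<le> GG f s" "GG f s \<le> 132 * s" unfolding GG_def using G by auto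
qed

lemma GG_lip:
  assumes "good R f" "good R g" "\<And>x. x \<in> {0..R} \<Longrightarrow> \<bar>f x - g x\<bar> \<le> d" "s \<in> {0<..R}"
  shows "\<bar>GG f s - GG g s\<bar> \<le> 300 * s * d"
proof -
  have s: "s \<in> {0..R}" "0 < s" "s \<le> 1/100" using assms R1 by auto
  have d0: "0 \<le> d" using assms(3)[of 0] R0 by force
  have "\<bar>mm f s - mm g s\<bar> \<le> 4*pi/3*d* s^3"
    using mm_diff[OF good_cont[OF assms(1)] good_cont[OF assms(2)] s(1) assms(3)] .
  also have "... \<le> 5* s^3*d"
  proof -
    have "(4*pi/3)*(d* s^3) \<le> 5*(d* s^3)" using pi_approx(2) d0 s by (intro mult_right_mono) auto
    then show ?thesis by (simp add: mult_ac)
  qed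
  finally have dm: "\<bar>mm f s - mm g s\<bar> \<le> 5* s^3*d" .
  have "\<bar>tov_rho_rhs s (mm f s) (f s) - tov_rho_rhs s (mm g s) (g s)\<bar> \<le> 300 * s * d"
    by (rule G_lip[OF s(2,3) mm_good_range[OF assms(1) s(1)] good_b[OF assms(1) s(1)]
         mm_good_range[OF assms(2) s(1)] good_b[OF assms(2) s(1)] assms(3)[OF s(1)] dm])
  then show ?thesis unfolding GG_def by linarith
qed

lemma GG_cont:
  assumes "good R f"
  shows "continuous_on {0..R} (GG f)"
proof -
  have cf: "continuous_on {0<..R} f" using good_cont[OF assms] by (rule continuous_on_subset) auto
  have cm: "continuous_on {0<..R} (mm f)" using mm_cont[OF good_cont[OF assms]] by (rule continuous_on_subset) auto
  have nz: "x - 2 * mm f x \<noteq> 0" if x: "x \<in> {0<..R}" for x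
  proof -
    have xs: "x \<in> {0..R}" "0 < x" "x \<le> 1/100" using x R1 by auto
    have "x^2 \<le> (1/100)^2" using xs by (intro power_mono) auto
    then have "x^3 \<le> x * (1/10000)" using xs by (simp add: power3_eq_cube power2_eq_square mult_left_mono)
    then have "2 * mm f x < x" using mm_good_range(2)[OF assms xs(1)] xs(2) by linarith
    then show ?thesis by simp
  qed
  have c1: "continuous_on {0<..R} (GG f)"
    unfolding GG_def tov_rho_rhs_def using cf cm nz
    by (intro continuous_intros) auto
  show ?thesis
    unfolding continuous_on_eq_continuous_within
  proof
    fix x assume x: "x \<in> {0..R}"
    show "continuous (at x within {0..R}) (GG f)"
    proof (cases "x = 0")
      case True
      show ?thesis unfolding True continuous_within_eps_delta
      proof (intro allI impI)
        fix e :: real assume e: "0 < e"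
        show "\<exists>d>0. \<forall>x'\<in>{0..R}. dist x' 0 < d \<longrightarrow> dist (GG f x') (GG f 0) < e"
        proof (intro exI[of _ "e/132"] conjI ballI impI)
          show "0 < e/132" using e by simp
          fix y assume y: "y \<in> {0..R}" "dist y 0 < e/132"
          show "dist (GG f y) (GG f 0) < e"
          proof (cases "y = 0")
            case True then show ?thesis using e by simp
          next
            case False
            then have "y \<in> {0<..R}" using y by auto
            note b = GG_bound[OF assms this]
            have "y < e/132" using y by (simp add: dist_real_def)
            then show ?thesis using b by (simp add: GG_zero dist_real_def)
          qed
        qed
      qed
    next
      case False
      then have x': "x \<in> {0<..R}" using x by auto
      have "at x within {0..R} = at x within {0<..R}"
        by (rule at_within_nhd[of _ "{0<..}"]) (use x' in auto)
      moreover have "continuous (at x within {0<..R}) (GG f)"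
        using c1 x' continuous_on_eq_continuous_within by blast
      ultimately show ?thesis by simp
    qed
  qed
qed

lemma GG_integrable:
  assumes "good R f" "0 \<le> a" "b \<le> R"
  shows "GG f integrable_on {a..b}"
proof -
  have "continuous_on {a..b} (GG f)" using GG_cont[OF assms(1)] by (rule continuous_on_subset) (use assms in auto)
  then show ?thesis by (rule integrable_continuous_interval)
qed


lemma intG_split:
  assumes "good R f" "a \<in> {0..R}"
  shows "integral {a..R} (GG f) = integral {0..R} (GG f) - integral {0..a} (GG f)"
  using Henstock_Kurzweil_Integration.integral_combine[where a=0 and c=a and b=R and f="GG f"] GG_integrable[OF assms(1), of 0 R] assms(2) by auto

lemma intG_bounds:
  assumes "good R f" "a \<in> {0..R}"
  shows "0 \<le> integral {a..R} (GG f)" "integral {a..R} (GG f) \<le> 132 * R^2"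
proof -
  have i: "GG f integrable_on {a..R}" using GG_integrable[OF assms(1)] assms(2) by auto
  have pos: "0 \<le> GG f s" and up: "GG f s \<le> 132 * R" if s: "s \<in> {a..R}" for s
  proof -
    show "0 \<le> GG f s"
    proof (cases "s = 0")
      case True then show ?thesis by (simp add: GG_zero)
    next
      case False then have "s \<in> {0<..R}" using s assms(2) by auto
      then show ?thesis using GG_bound[OF assms(1)] by blast
    qed
    show "GG f s \<le> 132 * R"
    proof (cases "s = 0")
      case True then show ?thesis using R0 by (simp add: GG_zero)
    next
      case False then have s': "s \<in> {0<..R}" using s assms(2) by auto
      then show ?thesis using GG_bound(2)[OF assms(1) s'] by auto
    qed
  qed
  show "0 \<le> integral {a..R} (GG f)" using i pos by (rule integral_nonneg)
  have "integral {a..R} (GG f) \<le> integral {a..R} (\<lambda>_. 132 * R)"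
    using i pos up by (intro integral_le) auto
  also have "... = (R - a) * (132 * R)" using assms(2) by simp
  also have "... \<le> R * (132 * R)" using assms(2) R0 by (intro mult_right_mono) auto
  finally show "integral {a..R} (GG f) \<le> 132 * R^2" by (simp add: power2_eq_square)
qed

lemma R2_small: "132 * R^2 \<le> 1" "300 * R^2 \<le> 1/20"
proof -
  have "R^2 \<le> (1/100)^2" using R0 R1 by (intro power_mono) auto
  then show "132 * R^2 \<le> 1" "300 * R^2 \<le> 1/20" by (auto simp: power2_eq_square)
qed

lemma intG_lip:
  assumes "good R f" "good R g" "\<And>x. x \<in> {0..R} \<Longrightarrow> \<bar>f x - g x\<bar> \<le> d" "a \<in> {0..R}"
  shows "\<bar>integral {a..R} (GG f) - integral {a..R} (GG g)\<bar> \<le> 300 * R^2 * d"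
proof -
  have d0: "0 \<le> d" using assms(3)[of 0] R0 by force
  have i1: "GG f integrable_on {a..R}" using GG_integrable[OF assms(1)] assms(4) by auto
  have i2: "GG g integrable_on {a..R}" using GG_integrable[OF assms(2)] assms(4) by auto
  have "integral {a..R} (GG f) - integral {a..R} (GG g) = integral {a..R} (\<lambda>s. GG f s - GG g s)"
    by (rule integral_diff[OF i1 i2, symmetric])
  also have "\<bar>...\<bar> \<le> integral {a..R} (\<lambda>_. 300 * R * d)"
  proof -
    have "norm (integral {a..R} (\<lambda>s. GG f s - GG g s)) \<le> integral {a..R} (\<lambda>_. 300 * R * d)"
    proof (rule integral_norm_bound_integral)
      show "(\<lambda>s. GG f s - GG g s) integrable_on {a..R}" using i1 i2 by (rule integrable_diff)
      show "(\<lambda>_. 300 * R * d) integrable_on {a..R}" by (rule integrable_continuous_interval) (intro continuous_intros)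
      fix x assume x: "x \<in> {a..R}"
      show "norm (GG f x - GG g x) \<le> 300 * R * d"
      proof (cases "x = 0")
        case True then show ?thesis using R0 d0 by (simp add: GG_zero)
      next
        case False then have x': "x \<in> {0<..R}" using x assms(4) by auto
        have "\<bar>GG f x - GG g x\<bar> \<le> 300 * x * d" by (rule GG_lip[OF assms(1-3) x'])
        also have "... \<le> 300 * R * d" using x' d0 by (intro mult_right_mono) auto
        finally show ?thesis by simp
      qed
    qed
    then show ?thesis by simp
  qed
  also have "... = (R - a) * (300 * R * d)" using assms(4) by simp
  also have "... \<le> R * (300 * R * d)" using assms(4) R0 d0 by (intro mult_right_mono) auto
  finally show ?thesis by (simp add: power2_eq_square mult_ac)
qed


lemma clamp_in: "clamp R x \<in> {0..R}" using R0 unfolding clamp_def by auto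
lemma clamp_id: "x \<in> {0..R} \<Longrightarrow> clamp R x = x" unfolding clamp_def by auto
lemma clamp_cont: "continuous_on UNIV (clamp R)" unfolding clamp_def by (intro continuous_intros)

lemma GG_nonneg: assumes "good R f" "s \<in> {0..R}" shows "0 \<le> GG f s"
proof (cases "s = 0")
  case True then show ?thesis by (simp add: GG_zero)
next
  case False then have "s \<in> {0<..R}" using assms by auto
  then show ?thesis using GG_bound[OF assms(1)] by blast
qed

lemma TT_eq: assumes "good R f"
  shows "TT R f x = 1 + (integral {0..R} (GG f) - integral {0..clamp R x} (GG f))"
  unfolding TT_def using intG_split[OF assms clamp_in] by simp

lemma TT_cont: assumes "good R f" shows "continuous_on UNIV (TT R f)"
proof -
  have J: "continuous_on {0..R} (\<lambda>a. integral {0..a} (GG f))"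
    using GG_integrable[OF assms, of 0 R] by (intro indefinite_integral_continuous_1) auto
  have "continuous_on UNIV (\<lambda>x. integral {0..clamp R x} (GG f))"
    by (rule continuous_on_compose2[OF J clamp_cont]) (use clamp_in in auto)
  then have "continuous_on UNIV (\<lambda>x. 1 + (integral {0..R} (GG f) - integral {0..clamp R x} (GG f)))"
    by (intro continuous_intros)
  then show ?thesis using TT_eq[OF assms] by simp
qed

lemma TT_bounds: assumes "good R f"
  shows "1 \<le> TT R f x" "TT R f x \<le> 1 + 132 * R^2" "TT R f x \<le> 2"
  using intG_bounds[OF assms clamp_in, of x] R2_small unfolding TT_def by auto

lemma TT_bc: assumes "good R f" shows "TT R f \<in> bcontfun"
  apply (rule bcontfun_normI[OF TT_cont[OF assms], of 2])
  subgoal for x using TT_bounds[OF assms, of x] by simp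
  done

definition SS :: "(real \<Rightarrow>\<^sub>C real) set" where
  "SS = {F. \<forall>x. apply_bcontfun F x = apply_bcontfun F (clamp R x) \<and> 1 \<le> apply_bcontfun F x \<and> apply_bcontfun F x \<le> 2}"

lemma SS_good: "F \<in> SS \<Longrightarrow> good R (apply_bcontfun F)"
  unfolding SS_def good_def by auto

lemma eval_cont: "continuous_on UNIV (\<lambda>F::real \<Rightarrow>\<^sub>C real. apply_bcontfun F x)"
  unfolding continuous_on_iff
proof (intro ballI allI impI)
  fix F :: "real \<Rightarrow>\<^sub>C real" and e :: real assume "0 < e"
  then show "\<exists>d>0. \<forall>G\<in>UNIV. dist G F < d \<longrightarrow> dist (apply_bcontfun G x) (apply_bcontfun F x) < e"
    using dist_bounded le_less_trans by blast
qed

lemma SS_closed: "closed SS"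
  unfolding SS_def
  by (intro closed_Collect_all closed_Collect_conj closed_Collect_eq closed_Collect_le eval_cont continuous_on_const)

lemma SS_ne: "const_bcontfun 1 \<in> SS"
  unfolding SS_def by (simp add: const_bcontfun.rep_eq)

definition PHI :: "(real \<Rightarrow>\<^sub>C real) \<Rightarrow> (real \<Rightarrow>\<^sub>C real)" where
  "PHI F = Bcontfun (TT R (apply_bcontfun F))"

lemma PHI_apply: "F \<in> SS \<Longrightarrow> apply_bcontfun (PHI F) = TT R (apply_bcontfun F)"
  unfolding PHI_def using TT_bc[OF SS_good] by (simp add: Bcontfun_inverse)

lemma PHI_SS: "PHI ` SS \<subseteq> SS"
proof
  fix G assume "G \<in> PHI ` SS"
  then obtain F where F: "F \<in> SS" "G = PHI F" by auto
  have cc: "clamp R (clamp R x) = clamp R x" for x using clamp_id[OF clamp_in] .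
  have e: "apply_bcontfun G x = TT R (apply_bcontfun F) x" for x using PHI_apply[OF F(1)] F(2) by simp
  show "G \<in> SS" unfolding SS_def
    using TT_bounds[OF SS_good[OF F(1)]] by (auto simp: e TT_def cc)
qed

lemma PHI_lip:
  assumes "F \<in> SS" "G \<in> SS"
  shows "dist (PHI F) (PHI G) \<le> 1/20 * dist F G"
proof (rule dist_bound)
  fix x
  have d: "\<bar>apply_bcontfun F y - apply_bcontfun G y\<bar> \<le> dist F G" for y
    using dist_bounded[of F y G] by (simp add: dist_real_def)
  have "\<bar>TT R F x - TT R G x\<bar> \<le> 300 * R^2 * dist F G"
    using intG_lip[OF SS_good[OF assms(1)] SS_good[OF assms(2)] d clamp_in] unfolding TT_def by simp
  also have "... \<le> 1/20 * dist F G" using R2_small(2) by (intro mult_right_mono) auto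
  finally show "dist (PHI F x) (PHI G x) \<le> 1/20 * dist F G"
    unfolding PHI_apply[OF assms(1)] PHI_apply[OF assms(2)] by (simp add: dist_real_def)
qed

lemma fixpoint: "\<exists>F\<in>SS. PHI F = F"
proof -
  have "complete SS" using SS_closed complete_eq_closed by blast
  from Banach_fix[OF this _ _ _ PHI_SS PHI_lip] SS_ne show ?thesis by auto
qed


lemma solution:
  "\<exists>m \<rho> :: real \<Rightarrow> real.
          continuous_on {0..R} m \<and> continuous_on {0..R} \<rho> \<and>
          (\<forall>r \<in> {0<..R}.
             (m has_real_derivative tov_m_rhs r (m r) (\<rho> r)) (at r within {0..R}) \<and>
             (\<rho> has_real_derivative tov_rho_rhs r (m r) (\<rho> r)) (at r within {0..R})) \<and>
          antimono_on {0..R} \<rho> \<and> mono_on {0..R} m \<and>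
          (\<forall>r \<in> {0..R}. 1 \<le> \<rho> r \<and> \<rho> r \<le> 1 + 132 * R^2) \<and>
          \<rho> R = 1 \<and> m 0 = 0 \<and>
          (\<forall>r \<in> {0<..R}. 1 \<le> 3 / (4 * pi) * (m r / r^3) \<and>
                          3 / (4 * pi) * (m r / r^3) \<le> 1 + 132 * R^2)"
proof -
  obtain F where F: "F \<in> SS" "PHI F = F" using fixpoint by blast
  define f where "f = apply_bcontfun F"
  have g: "good R f" unfolding f_def using SS_good[OF F(1)] .
  have ff: "f x = TT R f x" for x using PHI_apply[OF F(1)] F(2) unfolding f_def by metis
  have cf: "continuous_on {0..R} f" using good_cont[OF g] .
  define I where "I = integral {0..R} (GG f)"
  define J where "J a = integral {0..a} (GG f)" for a
  have fJ: "f x = 1 + (I - J x)" if "x \<in> {0..R}" for x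
    using ff[of x] TT_eq[OF g, of x] clamp_id[OF that] unfolding I_def J_def by simp
  have fI: "f x = 1 + integral {x..R} (GG f)" if "x \<in> {0..R}" for x
    using ff[of x] clamp_id[OF that] unfolding TT_def by simp
  have fb: "1 \<le> f x" "f x \<le> 1 + 132 * R^2" for x using TT_bounds[OF g, of x] ff[of x] by auto
  have dJ: "(J has_real_derivative GG f r) (at r within {0..R})" if "r \<in> {0..R}" for r
    using integral_has_vector_derivative[OF GG_cont[OF g] that]
    unfolding has_real_derivative_iff_has_vector_derivative J_def .
  show ?thesis
  proof (rule exI[of _ "mm f"], rule exI[of _ f], intro conjI ballI)
    show "continuous_on {0..R} (mm f)" by (rule mm_cont[OF cf])
    show "continuous_on {0..R} f" by (rule cf)
    fix r assume r: "r \<in> {0<..R}"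
    then have r': "r \<in> {0..R}" by auto
    show "(mm f has_real_derivative tov_m_rhs r (mm f r) (f r)) (at r within {0..R})"
      unfolding tov_m_rhs_def by (rule mm_deriv[OF cf r'])
    have "((\<lambda>x. 1 + (I - J x)) has_real_derivative (- GG f r)) (at r within {0..R})"
      using dJ[OF r'] by (auto intro!: derivative_eq_intros)
    then have "((\<lambda>x. 1 + (I - J x)) has_real_derivative tov_rho_rhs r (mm f r) (f r)) (at r within {0..R})"
      unfolding GG_def by simp
    then show "(f has_real_derivative tov_rho_rhs r (mm f r) (f r)) (at r within {0..R})"
      by (rule has_field_derivative_transform_within[where d=1]) (use r' fJ in auto)
  next
    show "antimono_on {0..R} f"
    proof (rule monotone_onI)
      fix x y assume xy: "x \<in> {0..R}" "y \<in> {0..R}" "x \<le> y"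
      have "integral {x..y} (GG f) + integral {y..R} (GG f) = integral {x..R} (GG f)"
        using Henstock_Kurzweil_Integration.integral_combine[where a=x and c=y and b=R and f="GG f"]
          GG_integrable[OF g, of x R] xy by auto
      moreover have "0 \<le> integral {x..y} (GG f)"
        using GG_integrable[OF g, of x y] GG_nonneg[OF g] xy by (intro integral_nonneg) auto
      ultimately show "f y \<le> f x" using fI[OF xy(1)] fI[OF xy(2)] by linarith
    qed
  next
    show "mono_on {0..R} (mm f)"
    proof (rule mono_onI)
      fix x y assume xy: "x \<in> {0..R}" "y \<in> {0..R}" "x \<le> y"
      have "integral {0..x} (\<lambda>s. 4*pi* s^2*f s) + integral {x..y} (\<lambda>s. 4*pi* s^2*f s) = integral {0..y} (\<lambda>s. 4*pi* s^2*f s)"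
        using Henstock_Kurzweil_Integration.integral_combine[where a=0 and c=x and b=y and f="(\<lambda>s. 4*pi* s^2*f s)"]
          mm_integrable[OF cf, of 0 y] xy by auto
      moreover have "0 \<le> integral {x..y} (\<lambda>s. 4*pi* s^2*f s)"
        using mm_integrable[OF cf, of x y] xy by (intro integral_nonneg) (auto intro!: mult_nonneg_nonneg order_trans[OF zero_le_one fb(1)])
      ultimately show "mm f x \<le> mm f y" unfolding mm_def by linarith
    qed
  next
    fix r assume r: "r \<in> {0..R}"
    show "1 \<le> f r" "f r \<le> 1 + 132 * R^2" using fb by auto
  next
    show "f R = 1" using fI[of R] R0 by simp
    show "mm f 0 = 0" unfolding mm_def by simp
  next
    fix r assume r: "r \<in> {0<..R}"
    then have r': "r \<in> {0..R}" and rp: "0 < r" by auto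
    have mb: "4*pi/3*1*r^3 \<le> mm f r" "mm f r \<le> 4*pi/3*(1 + 132 * R^2)*r^3"
      using mm_bounds[OF cf r', of 1 "1 + 132 * R^2"] fb by blast+
    have r3: "0 < r^3" using rp by simp
    show "1 \<le> 3 / (4 * pi) * (mm f r / r^3)" using mb(1) r3 by (simp add: field_simps)
    show "3 / (4 * pi) * (mm f r / r^3) \<le> 1 + 132 * R^2" using mb(2) r3 by (simp add: field_simps)
  qed
qed

end

theorem proposition2p1:
  "\<exists>R0 C :: real. 0 < R0 \<and> R0 < sqrt (3 / (4 * pi)) \<and> 0 < C \<and>
     (\<forall>R. 0 < R \<and> R < R0 \<longrightarrow>
       (\<exists>m \<rho> :: real \<Rightarrow> real.
          continuous_on {0..R} m \<and> continuous_on {0..R} \<rho> \<and>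
          (\<forall>r \<in> {0<..R}.
             (m has_real_derivative tov_m_rhs r (m r) (\<rho> r)) (at r within {0..R}) \<and>
             (\<rho> has_real_derivative tov_rho_rhs r (m r) (\<rho> r)) (at r within {0..R})) \<and>
          antimono_on {0..R} \<rho> \<and> mono_on {0..R} m \<and>
          (\<forall>r \<in> {0..R}. 1 \<le> \<rho> r \<and> \<rho> r \<le> 1 + C * R^2) \<and>
          \<rho> R = 1 \<and> m 0 = 0 \<and>
          (\<forall>r \<in> {0<..R}. 1 \<le> 3 / (4 * pi) * (m r / r^3) \<and>
                          3 / (4 * pi) * (m r / r^3) \<le> 1 + C * R^2)))"
proof (rule exI[of _ "1/100"], rule exI[of _ "132"], intro conjI allI impI)
  show "(0::real) < 1/100" by simp
  show "(0::real) < 132" by simp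
  have "(1/100::real)^2 < 3 / (4 * pi)" using pi_less_4 pi_gt_zero by (simp add: field_simps)
  then show "1/100 < sqrt (3 / (4 * pi))" by (rule real_less_rsqrt)
next
  fix R :: real assume "0 < R \<and> R < 1/100"
  then show "\<exists>m \<rho> :: real \<Rightarrow> real.
          continuous_on {0..R} m \<and> continuous_on {0..R} \<rho> \<and>
          (\<forall>r \<in> {0<..R}.
             (m has_real_derivative tov_m_rhs r (m r) (\<rho> r)) (at r within {0..R}) \<and>
             (\<rho> has_real_derivative tov_rho_rhs r (m r) (\<rho> r)) (at r within {0..R})) \<and>
          antimono_on {0..R} \<rho> \<and> mono_on {0..R} m \<and>
          (\<forall>r \<in> {0..R}. 1 \<le> \<rho> r \<and> \<rho> r \<le> 1 + 132 * R^2) \<and>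
          \<rho> R = 1 \<and> m 0 = 0 \<and>
          (\<forall>r \<in> {0<..R}. 1 \<le> 3 / (4 * pi) * (m r / r^3) \<and>
                          3 / (4 * pi) * (m r / r^3) \<le> 1 + 132 * R^2)"
    using solution[of R] by auto
qed

end
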